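(* Let $m$, $n$, $k$ be integers with $0 \le n < m \le N$ and $2 \le k \le N$. Then \[ \int_{\Lambda} \frac{y_1\prod_{i=2}^{n+1} y_i^2 \prod_{i=n+2}^{m} y_i}{y_1 - y_k}\,\Phi(y)\,dy = \begin{cases} -\dfrac{1}{2}\displaystyle\int_{\Lambda} \prod_{i=1}^{n-1} y_i^2 \prod_{i=n}^{m} y_i\,\Phi(y)\,dy & \text{if } 2 \le k \le n+1,\\[8pt] 0 & \text{if } n+2 \le k \le m,\\[2pt] \dfrac{1}{2}\displaystyle\int_{\Lambda} \prod_{i=1}^{n} y_i^2 \prod_{i=n+1}^{m-1} y_i\,\Phi(y)\,dy & \text{if } m+1 \le k \le N. \end{cases} \]
   Context: Let $N\ge 1$ be an integer and let $a,b,\rho$ be complex numbers with $\mathrm{Re}(a)>0$, $\mathrm{Re}(b)>0$ and $\mathrm{Re}(\rho) > -\min\{1/N,\ \mathrm{Re}(a)/(N-1),\ \mathrm{Re}(b)/(N-1)\}$ (replaced by $\mathrm{Re}(\rho)>-1$ when $N=1$). Let $\Lambda=(0,1)^N$ and for $y\in\Lambda$ put $\Phi(y)=\prod_{i=1}^N y_i^{a-1}(1-y_i)^{b-1}\prod_{1\le i<j\le N}|y_i-y_j|^{2\rho}$; $dy$ is Lebesgue measure on $\Lambda$. Empty products equal $1$. The parameters are assumed such that all integrals appearing converge absolutely. *)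

theory Defs
  imports "HOL-Analysis.Analysis" "HOL-Probability.Probability"
begin

definition lebN :: "nat \<Rightarrow> (nat \<Rightarrow> real) measure" where
  "lebN N = (\<Pi>\<^sub>M i\<in>{1..N}. lborel)"

definition Lam :: "nat \<Rightarrow> (nat \<Rightarrow> real) set" where
  "Lam N = PiE {1..N} (\<lambda>_. {0<..<1})"

definition Phi :: "nat \<Rightarrow> complex \<Rightarrow> complex \<Rightarrow> complex \<Rightarrow> (nat \<Rightarrow> real) \<Rightarrow> complex" where
  "Phi N a b rho y =
     (\<Prod>i\<in>{1..N}. complex_of_real (y i) powr (a - 1) * complex_of_real (1 - y i) powr (b - 1)) *
     (\<Prod>(i,j)\<in>{(i,j). 1 \<le> i \<and> i < j \<and> j \<le> N}. complex_of_real \<bar>y i - y j\<bar> powr (2 * rho))"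

definition admissible :: "nat \<Rightarrow> complex \<Rightarrow> complex \<Rightarrow> complex \<Rightarrow> bool" where
  "admissible N a b rho \<longleftrightarrow> N \<ge> 1 \<and> Re a > 0 \<and> Re b > 0 \<and>
     (if N = 1 then Re rho > -1
      else Re rho > - min (1 / real N) (min (Re a / (real N - 1)) (Re b / (real N - 1))))"

end

theory Submission
  imports Defs
begin

abbreviation TT :: "(nat \<Rightarrow> nat) \<Rightarrow> (nat \<Rightarrow> real) \<Rightarrow> (nat \<Rightarrow> real)" where
  "TT s y \<equiv> (\<lambda>i. y (s i))"

lemma perm_space:
  assumes s: "s permutes {1..N}" and y: "y \<in> space (lebN N)"
  shows "TT s y \<in> space (lebN N)"
proof -
  have e: "y \<in> extensional {1..N}" using y unfolding lebN_def space_PiM by (simp add: PiE_iff)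
  have "TT s y \<in> extensional {1..N}"
    unfolding extensional_def
  proof (intro CollectI allI impI)
    fix i assume "i \<notin> {1..N}"
    then show "y (s i) = undefined" using e \<open>i \<notin> {1..N}\<close> permutes_not_in[OF s \<open>i \<notin> {1..N}\<close>] by (simp add: extensional_def)
  qed
  then show ?thesis unfolding lebN_def space_PiM by (simp add: PiE_iff)
qed

lemma perm_meas:
  assumes s: "s permutes {1..N}"
  shows "TT s \<in> measurable (lebN N) (lebN N)"
  unfolding lebN_def
  apply (rule measurable_PiM_single')
   apply (rule measurable_component_singleton)
  using permutes_in_image[OF s] apply blast
  apply (rule Pi_I)
  apply (rule perm_space[OF s, unfolded lebN_def space_PiM])
  by (simp add: space_PiM)

lemma perm_distr:
  assumes s: "s permutes {1..N}"
  shows "distr (lebN N) (lebN N) (TT s) = lebN N"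
proof -
  interpret product_sigma_finite "\<lambda>_. lborel :: real measure"
    by (simp add: product_sigma_finite_def lborel.sigma_finite_measure_axioms)
  have is': "inv s permutes {1..N}" using s by (rule permutes_inv)
  show ?thesis
    unfolding lebN_def
  proof (rule PiM_eqI)
    show "finite {1..N}" by simp
    show "sets (distr (Pi\<^sub>M {1..N} (\<lambda>_. lborel)) (Pi\<^sub>M {1..N} (\<lambda>_. lborel)) (TT s)) = sets (Pi\<^sub>M {1..N} (\<lambda>_. lborel))"
      by simp
    fix A :: "nat \<Rightarrow> real set" assume A: "\<And>i. i \<in> {1..N} \<Longrightarrow> A i \<in> sets lborel"
    have m: "TT s \<in> measurable (Pi\<^sub>M {1..N} (\<lambda>_. lborel)) (Pi\<^sub>M {1..N} (\<lambda>_. lborel))"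
      using perm_meas[OF s] unfolding lebN_def .
    have pre: "TT s -` Pi\<^sub>E {1..N} A \<inter> space (Pi\<^sub>M {1..N} (\<lambda>_. lborel :: real measure))
        = Pi\<^sub>E {1..N} (\<lambda>j. A (inv s j))"
    proof (intro set_eqI iffI)
      fix y assume yy: "y \<in> TT s -` Pi\<^sub>E {1..N} A \<inter> space (Pi\<^sub>M {1..N} (\<lambda>_. lborel :: real measure))"
      then have y1: "\<And>i. i \<in> {1..N} \<Longrightarrow> y (s i) \<in> A i"
        by (simp add: PiE_iff del: atLeastAtMost_iff)
      have y2: "y \<in> extensional {1..N}" using yy by (simp add: space_PiM PiE_iff del: atLeastAtMost_iff)
      have "y j \<in> A (inv s j)" if j: "j \<in> {1..N}" for j
      proof -
        have "inv s j \<in> {1..N}" by (rule permutes_in_image[OF is', THEN iffD2, OF j])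
        from y1[OF this] show ?thesis by (simp add: permutes_inverses(1)[OF s])
      qed
      then show "y \<in> Pi\<^sub>E {1..N} (\<lambda>j. A (inv s j))" using y2 by (simp add: PiE_iff del: atLeastAtMost_iff)
    next
      fix y assume y: "y \<in> Pi\<^sub>E {1..N} (\<lambda>j. A (inv s j))"
      have "y (s i) \<in> A i" if i: "i \<in> {1..N}" for i
      proof -
        have "s i \<in> {1..N}" by (rule permutes_in_image[OF s, THEN iffD2, OF i])
        with y have "y (s i) \<in> A (inv s (s i))" by (simp add: PiE_iff del: atLeastAtMost_iff)
        then show ?thesis by (simp add: permutes_inverses(2)[OF s])
      qed
      moreover have "TT s y \<in> extensional {1..N}"
        unfolding extensional_def
      proof (intro CollectI allI impI)
        fix i assume i: "i \<notin> {1..N}"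
        have "y \<in> extensional {1..N}" using y by (simp add: PiE_iff del: atLeastAtMost_iff)
        then show "y (s i) = undefined" using i permutes_not_in[OF s i] by (simp add: extensional_def)
      qed
      moreover have "y \<in> extensional {1..N}" using y by (simp add: PiE_iff del: atLeastAtMost_iff)
      ultimately show "y \<in> TT s -` Pi\<^sub>E {1..N} A \<inter> space (Pi\<^sub>M {1..N} (\<lambda>_. lborel :: real measure))"
        by (simp add: space_PiM PiE_iff del: atLeastAtMost_iff)
    qed
    have "emeasure (distr (Pi\<^sub>M {1..N} (\<lambda>_. lborel)) (Pi\<^sub>M {1..N} (\<lambda>_. lborel)) (TT s)) (Pi\<^sub>E {1..N} A)
        = emeasure (Pi\<^sub>M {1..N} (\<lambda>_. lborel)) (Pi\<^sub>E {1..N} (\<lambda>j. A (inv s j)))"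
    proof -
      have "Pi\<^sub>E {1..N} A \<in> sets (Pi\<^sub>M {1..N} (\<lambda>_. lborel))"
        using A by (intro sets_PiM_I_finite) auto
      then show ?thesis by (simp only: emeasure_distr[OF m] pre)
    qed
    also have "\<dots> = (\<Prod>j\<in>{1..N}. emeasure lborel (A (inv s j)))"
    proof (rule emeasure_PiM)
      show "finite {1..N}" by simp
      fix j assume j: "j \<in> {1..N}"
      have "inv s j \<in> {1..N}" by (rule permutes_in_image[OF is', THEN iffD2, OF j])
      then show "A (inv s j) \<in> sets lborel" by (rule A)
    qed
    also have "\<dots> = (\<Prod>i\<in>{1..N}. emeasure lborel (A i))"
      using prod.permute[OF is', of "\<lambda>i. emeasure lborel (A i)"] by (simp add: o_def)
    finally show "emeasure (distr (Pi\<^sub>M {1..N} (\<lambda>_. lborel)) (Pi\<^sub>M {1..N} (\<lambda>_. lborel)) (TT s)) (Pi\<^sub>E {1..N} A)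
        = (\<Prod>i\<in>{1..N}. emeasure lborel (A i))" .
  qed
qed

lemma TT_inv:
  assumes s: "s permutes {1..N}"
  shows "TT s (TT (inv s) y) = y" "TT (inv s) (TT s y) = y"
  by (simp_all add: permutes_inverses[OF s])

lemma perm_PiE:
  assumes s: "s permutes {1..N}" and y: "y \<in> Pi\<^sub>E {1..N} (\<lambda>_. B)"
  shows "TT s y \<in> Pi\<^sub>E {1..N} (\<lambda>_. B)"
proof -
  have "y (s i) \<in> B" if i: "i \<in> {1..N}" for i
  proof -
    have "s i \<in> {1..N}" by (rule permutes_in_image[OF s, THEN iffD2, OF i])
    with y show ?thesis by (simp add: PiE_iff del: atLeastAtMost_iff)
  qed
  moreover have "TT s y \<in> extensional {1..N}"
    unfolding extensional_def
  proof (intro CollectI allI impI)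
    fix i assume i: "i \<notin> {1..N}"
    have "y \<in> extensional {1..N}" using y by (simp add: PiE_iff del: atLeastAtMost_iff)
    then show "y (s i) = undefined" using i permutes_not_in[OF s i] by (simp add: extensional_def)
  qed
  ultimately show ?thesis by (simp add: PiE_iff del: atLeastAtMost_iff)
qed

lemma perm_Lam:
  assumes s: "s permutes {1..N}"
  shows "(TT s y \<in> Lam N) = (y \<in> Lam N)"
proof
  assume "TT s y \<in> Lam N"
  then have "TT (inv s) (TT s y) \<in> Lam N"
    unfolding Lam_def by (rule perm_PiE[OF permutes_inv[OF s]])
  then show "y \<in> Lam N" by (simp only: TT_inv[OF s])
next
  assume "y \<in> Lam N"
  then show "TT s y \<in> Lam N" unfolding Lam_def by (rule perm_PiE[OF s])
qed

lemma perm_integrable: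
  fixes g :: "(nat \<Rightarrow> real) \<Rightarrow> complex"
  assumes s: "s permutes {1..N}" and g: "integrable (lebN N) g"
  shows "integrable (lebN N) (\<lambda>y. g (TT s y))"
proof -
  have "integrable (distr (lebN N) (lebN N) (TT s)) g" using g by (simp only: perm_distr[OF s])
  then show ?thesis by (rule integrable_distr[OF perm_meas[OF s]])
qed

lemma perm_integral:
  fixes g :: "(nat \<Rightarrow> real) \<Rightarrow> complex"
  assumes s: "s permutes {1..N}"
  shows "integral\<^sup>L (lebN N) g = integral\<^sup>L (lebN N) (\<lambda>y. g (TT s y))"
proof (cases "integrable (lebN N) g")
  case True
  have "integral\<^sup>L (lebN N) g = integral\<^sup>L (distr (lebN N) (lebN N) (TT s)) g"
    by (simp only: perm_distr[OF s])
  also have "\<dots> = integral\<^sup>L (lebN N) (\<lambda>y. g (TT s y))"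
    by (rule integral_distr[OF perm_meas[OF s]]) (rule borel_measurable_integrable[OF True])
  finally show ?thesis .
next
  case False
  have "\<not> integrable (lebN N) (\<lambda>y. g (TT s y))"
  proof
    assume "integrable (lebN N) (\<lambda>y. g (TT s y))"
    from perm_integrable[OF permutes_inv[OF s] this]
    have "integrable (lebN N) (\<lambda>y. g (TT s (TT (inv s) y)))" .
    then show False using False by (simp only: TT_inv[OF s])
  qed
  then show ?thesis using False by (simp add: not_integrable_integral_eq)
qed

lemma perm_set_integral:
  fixes F :: "(nat \<Rightarrow> real) \<Rightarrow> complex"
  assumes s: "s permutes {1..N}"
  shows "(LINT y:Lam N|lebN N. F y) = (LINT y:Lam N|lebN N. F (TT s y))"
  unfolding set_lebesgue_integral_def
  by (subst perm_integral[OF s]) (simp add: indicator_def perm_Lam[OF s])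

lemma perm_set_integrable:
  fixes F :: "(nat \<Rightarrow> real) \<Rightarrow> complex"
  assumes s: "s permutes {1..N}" and F: "set_integrable (lebN N) (Lam N) F"
  shows "set_integrable (lebN N) (Lam N) (\<lambda>y. F (TT s y))"
proof -
  have "integrable (lebN N) (\<lambda>y. indicator (Lam N) (TT s y) *\<^sub>R F (TT s y))"
    using perm_integrable[OF s F[unfolded set_integrable_def]] .
  then show ?thesis unfolding set_integrable_def by (simp add: indicator_def perm_Lam[OF s])
qed

lemma pairs_perm:
  fixes f :: "nat \<Rightarrow> nat \<Rightarrow> complex"
  assumes s: "s permutes {1..N}" and sym: "\<And>u v. f u v = f v u"
  shows "(\<Prod>(i,j)\<in>{(i,j). 1 \<le> i \<and> i < j \<and> j \<le> N}. f (s i) (s j))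
       = (\<Prod>(i,j)\<in>{(i,j). 1 \<le> i \<and> i < j \<and> j \<le> N}. f i j)"
proof -
  define t where "t = inv s"
  have t: "t permutes {1..N}" unfolding t_def by (rule permutes_inv[OF s])
  have st: "\<And>x. s (t x) = x" and ts: "\<And>x. t (s x) = x"
    unfolding t_def by (simp_all add: permutes_inverses[OF s])
  have sin: "\<And>x. 1 \<le> s x \<and> s x \<le> N \<longleftrightarrow> 1 \<le> x \<and> x \<le> N"
    using permutes_in_image[OF s] by simp
  have tin: "\<And>x. 1 \<le> t x \<and> t x \<le> N \<longleftrightarrow> 1 \<le> x \<and> x \<le> N"
    using permutes_in_image[OF t] by simp
  have sinj: "\<And>a b. s a = s b \<longleftrightarrow> a = b" by (metis ts)
  have tinj: "\<And>a b. t a = t b \<longleftrightarrow> a = b" by (metis st)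
  show ?thesis
  proof (rule prod.reindex_bij_witness[where j = "\<lambda>(a,b). (min (s a) (s b), max (s a) (s b))"
        and i = "\<lambda>(a,b). (min (t a) (t b), max (t a) (t b))"])
    fix p assume p: "p \<in> {(i,j). 1 \<le> i \<and> i < j \<and> j \<le> N}"
    obtain a b where ab: "p = (a,b)" by (cases p)
    show "(case case p of (a, b) \<Rightarrow> (min (s a) (s b), max (s a) (s b)) of
          (a, b) \<Rightarrow> (min (t a) (t b), max (t a) (t b))) = p"
      using p unfolding ab by (auto simp: min_def max_def ts)
    show "(case p of (a, b) \<Rightarrow> (min (s a) (s b), max (s a) (s b))) \<in> {(i,j). 1 \<le> i \<and> i < j \<and> j \<le> N}"
      using p sin[of a] sin[of b] sinj[of a b] unfolding ab by (auto simp: min_def max_def)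
    show "(case case p of (a, b) \<Rightarrow> (min (s a) (s b), max (s a) (s b)) of (i, j) \<Rightarrow> f i j)
        = (case p of (i, j) \<Rightarrow> f (s i) (s j))"
      using p unfolding ab by (auto simp: min_def max_def sym)
  next
    fix p assume p: "p \<in> {(i,j). 1 \<le> i \<and> i < j \<and> j \<le> N}"
    obtain a b where ab: "p = (a,b)" by (cases p)
    show "(case case p of (a, b) \<Rightarrow> (min (t a) (t b), max (t a) (t b)) of
          (a, b) \<Rightarrow> (min (s a) (s b), max (s a) (s b))) = p"
      using p unfolding ab by (auto simp: min_def max_def st)
    show "(case p of (a, b) \<Rightarrow> (min (t a) (t b), max (t a) (t b))) \<in> {(i,j). 1 \<le> i \<and> i < j \<and> j \<le> N}"
      using p tin[of a] tin[of b] tinj[of a b] unfolding ab by (auto simp: min_def max_def)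
  qed
qed

lemma Phi_perm:
  assumes s: "s permutes {1..N}"
  shows "Phi N a b rho (TT s y) = Phi N a b rho y"
proof -
  have 1: "(\<Prod>i\<in>{1..N}. complex_of_real (y (s i)) powr (a - 1) * complex_of_real (1 - y (s i)) powr (b - 1))
      = (\<Prod>i\<in>{1..N}. complex_of_real (y i) powr (a - 1) * complex_of_real (1 - y i) powr (b - 1))"
    using prod.permute[OF s, of "\<lambda>i. complex_of_real (y i) powr (a - 1) * complex_of_real (1 - y i) powr (b - 1)"]
    by (simp add: o_def)
  have 2: "(\<Prod>(i,j)\<in>{(i,j). 1 \<le> i \<and> i < j \<and> j \<le> N}. complex_of_real \<bar>y (s i) - y (s j)\<bar> powr (2 * rho))
      = (\<Prod>(i,j)\<in>{(i,j). 1 \<le> i \<and> i < j \<and> j \<le> N}. complex_of_real \<bar>y i - y j\<bar> powr (2 * rho))"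
    by (rule pairs_perm[OF s, where f = "\<lambda>u v. complex_of_real \<bar>y u - y v\<bar> powr (2 * rho)"]) (simp add: abs_minus_commute)
  show ?thesis unfolding Phi_def using 1 2 by simp
qed

lemma Phi_zero:
  assumes "1 \<le> i" "i < j" "j \<le> N" "y i = y j"
  shows "Phi N a b rho y = 0"
proof -
  have fin: "finite {(i,j). 1 \<le> i \<and> i < j \<and> j \<le> (N::nat)}"
    by (rule finite_subset[of _ "{1..N} \<times> {1..N}"]) auto
  have "(\<Prod>(i,j)\<in>{(i,j). 1 \<le> i \<and> i < j \<and> j \<le> N}. complex_of_real \<bar>y i - y j\<bar> powr (2 * rho)) = 0"
    by (rule prod_zero[OF fin]) (use assms in auto)
  then show ?thesis unfolding Phi_def by simp
qed

lemma set_integral_neg: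
  fixes H :: "(nat \<Rightarrow> real) \<Rightarrow> complex"
  shows "(LINT y:A|M. - H y) = - (LINT y:A|M. H y)"
  unfolding set_lebesgue_integral_def by simp

lemma sym_two:
  fixes F G :: "(nat \<Rightarrow> real) \<Rightarrow> complex"
  assumes s: "s permutes {1..N}" and F: "set_integrable (lebN N) (Lam N) F"
    and eq: "\<And>y. F y + F (TT s y) = G y"
  shows "(LINT y:Lam N|lebN N. G y) = 2 * (LINT y:Lam N|lebN N. F y)"
proof -
  have "(LINT y:Lam N|lebN N. G y) = (LINT y:Lam N|lebN N. F y + F (TT s y))"
    by (simp add: eq)
  also have "\<dots> = (LINT y:Lam N|lebN N. F y) + (LINT y:Lam N|lebN N. F (TT s y))"
    by (rule set_integral_add(2)[OF F perm_set_integrable[OF s F]])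
  also have "(LINT y:Lam N|lebN N. F (TT s y)) = (LINT y:Lam N|lebN N. F y)"
    by (rule perm_set_integral[OF s, symmetric])
  finally show ?thesis by simp
qed

lemma antisym_zero:
  fixes F :: "(nat \<Rightarrow> real) \<Rightarrow> complex"
  assumes s: "s permutes {1..N}" and eq: "\<And>y. F (TT s y) = - F y"
  shows "(LINT y:Lam N|lebN N. F y) = 0"
proof -
  have "(LINT y:Lam N|lebN N. F y) = (LINT y:Lam N|lebN N. F (TT s y))"
    by (rule perm_set_integral[OF s])
  also have "\<dots> = - (LINT y:Lam N|lebN N. F y)"
    by (simp add: eq set_integral_neg)
  finally show ?thesis by simp
qed

lemma shift1:
  fixes g :: "nat \<Rightarrow> real"
  shows "(\<Prod>i\<in>{a+1..b+1}. g (i - 1)) = (\<Prod>i\<in>{a..b}. g i)"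
  by (rule prod.reindex_bij_witness[of _ "\<lambda>i. i+1" "\<lambda>i. i-1"]) auto

lemma permI':
  assumes "\<And>i. i \<in> {1..N} \<Longrightarrow> s i \<in> {1..N}" "inj_on s {1..N}" "\<And>i. i \<notin> {1..N} \<Longrightarrow> s i = i"
  shows "s permutes {1..(N::nat)}"
proof (rule bij_imp_permutes)
  have "s ` {1..N} = {1..N}" by (rule endo_inj_surj) (use assms in auto)
  then show "bij_betw s {1..N} {1..N}" using assms(2) by (simp add: bij_betw_def)
qed (use assms in auto)

lemma case2:
  fixes N m n k :: nat and a b rho :: complex
  assumes nm: "n < m" and mN: "m \<le> N" and k2: "n + 2 \<le> k" and km: "k \<le> m"
  shows "(LINT y:Lam N|lebN N. complex_of_real (y 1 * (\<Prod>i\<in>{2..n+1}. (y i)\<^sup>2) * (\<Prod>i\<in>{n+2..m}. y i) / (y 1 - y k)) * Phi N a b rho y) = 0"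
proof (rule antisym_zero)
  define t where "t = Transposition.transpose (1::nat) k"
  show tp: "t permutes {1..N}" unfolding t_def by (rule permutes_swap_id) (use k2 km mN in auto)
  fix y :: "nat \<Rightarrow> real"
  have t1: "t 1 = k" and tk: "t k = 1" and to: "\<And>i. i \<noteq> 1 \<Longrightarrow> i \<noteq> k \<Longrightarrow> t i = i"
    unfolding t_def by auto
  have P1: "(\<Prod>i\<in>{2..n+1}. (y (t i))\<^sup>2) = (\<Prod>i\<in>{2..n+1}. (y i)\<^sup>2)"
    by (rule prod.cong) (use k2 to in auto)
  have kin: "k \<in> {n+2..m}" using k2 km by auto
  have P2: "(\<Prod>i\<in>{n+2..m}. y (t i)) = y 1 * (\<Prod>i\<in>{n+2..m} - {k}. y i)"
  proof -
    have "(\<Prod>i\<in>{n+2..m}. y (t i)) = y (t k) * (\<Prod>i\<in>{n+2..m} - {k}. y (t i))"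
      by (rule prod.remove[OF _ kin]) simp
    also have "(\<Prod>i\<in>{n+2..m} - {k}. y (t i)) = (\<Prod>i\<in>{n+2..m} - {k}. y i)"
      by (rule prod.cong) (use to k2 in auto)
    finally show ?thesis by (simp add: tk)
  qed
  have P3: "(\<Prod>i\<in>{n+2..m}. y i) = y k * (\<Prod>i\<in>{n+2..m} - {k}. y i)"
    by (rule prod.remove[OF _ kin]) simp
  show "complex_of_real (TT t y 1 * (\<Prod>i\<in>{2..n+1}. (TT t y i)\<^sup>2) * (\<Prod>i\<in>{n+2..m}. TT t y i) / (TT t y 1 - TT t y k)) * Phi N a b rho (TT t y)
      = - (complex_of_real (y 1 * (\<Prod>i\<in>{2..n+1}. (y i)\<^sup>2) * (\<Prod>i\<in>{n+2..m}. y i) / (y 1 - y k)) * Phi N a b rho y)"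
    unfolding Phi_perm[OF tp] P1 P2 P3 t1 tk
  proof -
    have "y k * (\<Prod>i\<in>{2..n+1}. (y i)\<^sup>2) * (y 1 * (\<Prod>i\<in>{n+2..m} - {k}. y i)) / (y k - y 1)
       = - (y 1 * (\<Prod>i\<in>{2..n+1}. (y i)\<^sup>2) * (y k * (\<Prod>i\<in>{n+2..m} - {k}. y i)) / (y 1 - y k))"
      by (cases "y 1 = y k") (simp_all add: field_simps)
    then show "complex_of_real (y k * (\<Prod>i\<in>{2..n+1}. (y i)\<^sup>2) * (y 1 * (\<Prod>i\<in>{n+2..m} - {k}. y i)) / (y k - y 1)) * Phi N a b rho y
      = - (complex_of_real (y 1 * (\<Prod>i\<in>{2..n+1}. (y i)\<^sup>2) * (y k * (\<Prod>i\<in>{n+2..m} - {k}. y i)) / (y 1 - y k)) * Phi N a b rho y)"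
      by simp
  qed
qed

lemma alg3:
  fixes u v A B :: real
  assumes "u \<noteq> v"
  shows "u * A * B / (u - v) + v * A * B / (v - u) = A * B"
proof -
  have d: "u - v \<noteq> 0" using assms by auto
  have "v * A * B / (v - u) = - (v * A * B / (u - v))"
    by (metis minus_diff_eq divide_minus_right)
  then have "u * A * B / (u - v) + v * A * B / (v - u) = (u * A * B - v * A * B) / (u - v)"
    by (simp add: diff_divide_distrib)
  also have "\<dots> = (u - v) * (A * B) / (u - v)" by (simp add: algebra_simps)
  also have "\<dots> = A * B" using d by simp
  finally show ?thesis .
qed

lemma case3:
  fixes N m n k :: nat and a b rho :: complex
  assumes nm: "n < m" and mN: "m \<le> N" and k1: "m + 1 \<le> k" and kN: "k \<le> N"
    and int_lhs: "set_integrable (lebN N) (Lam N)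
       (\<lambda>y. complex_of_real (y 1 * (\<Prod>i\<in>{2..n+1}. (y i)\<^sup>2) * (\<Prod>i\<in>{n+2..m}. y i) / (y 1 - y k))
            * Phi N a b rho y)"
  shows "(LINT y:Lam N|lebN N. complex_of_real (y 1 * (\<Prod>i\<in>{2..n+1}. (y i)\<^sup>2) * (\<Prod>i\<in>{n+2..m}. y i) / (y 1 - y k)) * Phi N a b rho y)
      = (1/2) * (LINT y:Lam N|lebN N. complex_of_real ((\<Prod>i\<in>{1..n}. (y i)\<^sup>2) * (\<Prod>i\<in>{n+1..m-1}. y i)) * Phi N a b rho y)"
proof -
  define t where "t = Transposition.transpose (1::nat) k"
  have tp: "t permutes {1..N}" unfolding t_def by (rule permutes_swap_id) (use k1 kN nm in auto)
  have t1: "t 1 = k" and tk: "t k = 1" and to: "\<And>i. i \<noteq> 1 \<Longrightarrow> i \<noteq> k \<Longrightarrow> t i = i"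
    unfolding t_def by auto
  define Pr where "Pr y = (\<Prod>i\<in>{2..n+1}. (y i)\<^sup>2) * (\<Prod>i\<in>{n+2..m}. y i)" for y :: "nat \<Rightarrow> real"
  have eqs: "complex_of_real (y 1 * (\<Prod>i\<in>{2..n+1}. (y i)\<^sup>2) * (\<Prod>i\<in>{n+2..m}. y i) / (y 1 - y k)) * Phi N a b rho y
     + complex_of_real (TT t y 1 * (\<Prod>i\<in>{2..n+1}. (TT t y i)\<^sup>2) * (\<Prod>i\<in>{n+2..m}. TT t y i) / (TT t y 1 - TT t y k)) * Phi N a b rho (TT t y)
     = complex_of_real (Pr y) * Phi N a b rho y" for y
  proof -
    have P1: "(\<Prod>i\<in>{2..n+1}. (y (t i))\<^sup>2) = (\<Prod>i\<in>{2..n+1}. (y i)\<^sup>2)"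
      by (rule prod.cong) (use k1 nm to in auto)
    have P2: "(\<Prod>i\<in>{n+2..m}. y (t i)) = (\<Prod>i\<in>{n+2..m}. y i)"
      by (rule prod.cong) (use k1 to in auto)
    show ?thesis
    proof (cases "y 1 = y k")
      case True
      have "Phi N a b rho y = 0" by (rule Phi_zero[of 1 k]) (use True k1 kN nm in auto)
      then show ?thesis by (simp add: Phi_perm[OF tp])
    next
      case False
      have "y 1 * (\<Prod>i\<in>{2..n+1}. (y i)\<^sup>2) * (\<Prod>i\<in>{n+2..m}. y i) / (y 1 - y k)
          + y k * (\<Prod>i\<in>{2..n+1}. (y i)\<^sup>2) * (\<Prod>i\<in>{n+2..m}. y i) / (y k - y 1) = Pr y"
        unfolding Pr_def by (rule alg3[OF False])
      then have "complex_of_real (y 1 * (\<Prod>i\<in>{2..n+1}. (y i)\<^sup>2) * (\<Prod>i\<in>{n+2..m}. y i) / (y 1 - y k))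
          + complex_of_real (y k * (\<Prod>i\<in>{2..n+1}. (y i)\<^sup>2) * (\<Prod>i\<in>{n+2..m}. y i) / (y k - y 1)) = complex_of_real (Pr y)"
        by (metis of_real_add)
      then show ?thesis unfolding Phi_perm[OF tp] P1 P2 t1 tk by (simp only: distrib_right[symmetric])
    qed
  qed
  have two: "(LINT y:Lam N|lebN N. complex_of_real (Pr y) * Phi N a b rho y)
      = 2 * (LINT y:Lam N|lebN N. complex_of_real (y 1 * (\<Prod>i\<in>{2..n+1}. (y i)\<^sup>2) * (\<Prod>i\<in>{n+2..m}. y i) / (y 1 - y k)) * Phi N a b rho y)"
    by (rule sym_two[OF tp int_lhs eqs])
  define sg where "sg i = (if i = 1 then m else if 2 \<le> i \<and> i \<le> m then i - 1 else i)" for i :: nat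
  have sgp: "sg permutes {1..N}"
  proof (rule permI')
    have m1: "1 \<le> m" "1 \<le> N" using nm mN by auto
    show "sg i \<in> {1..N}" if i: "i \<in> {1..N}" for i
      using i m1 mN unfolding sg_def by auto
    show "inj_on sg {1..N}" using nm by (auto simp: sg_def inj_on_def split: if_splits)
    show "\<And>i. i \<notin> {1..N} \<Longrightarrow> sg i = i" using m1 mN by (auto simp: sg_def)
  qed
  have PrQ: "Pr (TT sg y) = (\<Prod>i\<in>{1..n}. (y i)\<^sup>2) * (\<Prod>i\<in>{n+1..m-1}. y i)" for y
  proof -
    have A: "(\<Prod>i\<in>{2..n+1}. (y (sg i))\<^sup>2) = (\<Prod>i\<in>{2..n+1}. (y (i - 1))\<^sup>2)"
      by (rule prod.cong) (use nm in \<open>auto simp: sg_def\<close>)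
    have A2: "(\<Prod>i\<in>{2..n+1}. (y (i - 1))\<^sup>2) = (\<Prod>i\<in>{1..n}. (y i)\<^sup>2)"
      by (rule prod.reindex_bij_witness[of _ "\<lambda>i. i+1" "\<lambda>i. i-1"]) auto
    have B: "(\<Prod>i\<in>{n+2..m}. y (sg i)) = (\<Prod>i\<in>{n+2..m}. y (i - 1))"
      by (rule prod.cong) (auto simp: sg_def)
    have mm: "m - 1 + 1 = m" "n + 1 + 1 = n + 2" using nm by auto
    have B2: "(\<Prod>i\<in>{n+2..m}. y (i - 1)) = (\<Prod>i\<in>{n+1..m-1}. y i)"
      using shift1[of y "n+1" "m-1"] unfolding mm .
    show ?thesis unfolding Pr_def A A2 B B2 ..
  qed
  have "(LINT y:Lam N|lebN N. complex_of_real (Pr y) * Phi N a b rho y)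
      = (LINT y:Lam N|lebN N. complex_of_real (Pr (TT sg y)) * Phi N a b rho (TT sg y))"
    by (rule perm_set_integral[OF sgp])
  also have "\<dots> = (LINT y:Lam N|lebN N. complex_of_real ((\<Prod>i\<in>{1..n}. (y i)\<^sup>2) * (\<Prod>i\<in>{n+1..m-1}. y i)) * Phi N a b rho y)"
    unfolding PrQ Phi_perm[OF sgp] ..
  finally have eqQ: "(LINT y:Lam N|lebN N. complex_of_real (Pr y) * Phi N a b rho y)
     = (LINT y:Lam N|lebN N. complex_of_real ((\<Prod>i\<in>{1..n}. (y i)\<^sup>2) * (\<Prod>i\<in>{n+1..m-1}. y i)) * Phi N a b rho y)" .
  have gen: "\<And>(X::complex) Y. Y = 2 * X \<Longrightarrow> X = 1/2 * Y" by simp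
  show ?thesis by (rule gen) (simp only: eqQ[symmetric] two)
qed

lemma alg1:
  fixes u v E C :: real
  assumes "u \<noteq> v"
  shows "u * (v\<^sup>2 * E) * C / (u - v) + v * (u\<^sup>2 * E) * C / (v - u) = - (u * v * E * C)"
proof -
  have d: "u - v \<noteq> 0" using assms by auto
  have "v * (u\<^sup>2 * E) * C / (v - u) = - (v * (u\<^sup>2 * E) * C / (u - v))"
    by (metis minus_diff_eq divide_minus_right)
  then have "u * (v\<^sup>2 * E) * C / (u - v) + v * (u\<^sup>2 * E) * C / (v - u)
      = (u * (v\<^sup>2 * E) * C - v * (u\<^sup>2 * E) * C) / (u - v)"
    by (simp add: diff_divide_distrib)
  also have "\<dots> = (u - v) * (- (u * v * E * C)) / (u - v)" by (simp add: algebra_simps power2_eq_square)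
  also have "\<dots> = - (u * v * E * C)" using d by simp
  finally show ?thesis .
qed

lemma case1:
  fixes N m n k :: nat and a b rho :: complex
  assumes nm: "n < m" and mN: "m \<le> N" and k2: "2 \<le> k" and kn: "k \<le> n + 1"
    and int_lhs: "set_integrable (lebN N) (Lam N)
       (\<lambda>y. complex_of_real (y 1 * (\<Prod>i\<in>{2..n+1}. (y i)\<^sup>2) * (\<Prod>i\<in>{n+2..m}. y i) / (y 1 - y k))
            * Phi N a b rho y)"
  shows "(LINT y:Lam N|lebN N. complex_of_real (y 1 * (\<Prod>i\<in>{2..n+1}. (y i)\<^sup>2) * (\<Prod>i\<in>{n+2..m}. y i) / (y 1 - y k)) * Phi N a b rho y)
      = - (1/2) * (LINT y:Lam N|lebN N. complex_of_real ((\<Prod>i\<in>{1..n-1}. (y i)\<^sup>2) * (\<Prod>i\<in>{n..m}. y i)) * Phi N a b rho y)"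
proof -
  define t where "t = Transposition.transpose (1::nat) k"
  have tp: "t permutes {1..N}" unfolding t_def by (rule permutes_swap_id) (use k2 kn nm mN in auto)
  have t1: "t 1 = k" and tk: "t k = 1" and to: "\<And>i. i \<noteq> 1 \<Longrightarrow> i \<noteq> k \<Longrightarrow> t i = i"
    unfolding t_def by auto
  have kin: "k \<in> {2..n+1}" using k2 kn by auto
  define D where "D y = y 1 * y k * (\<Prod>i\<in>{2..n+1} - {k}. (y i)\<^sup>2) * (\<Prod>i\<in>{n+2..m}. y i)" for y :: "nat \<Rightarrow> real"
  have eqs: "complex_of_real (y 1 * (\<Prod>i\<in>{2..n+1}. (y i)\<^sup>2) * (\<Prod>i\<in>{n+2..m}. y i) / (y 1 - y k)) * Phi N a b rho y
     + complex_of_real (TT t y 1 * (\<Prod>i\<in>{2..n+1}. (TT t y i)\<^sup>2) * (\<Prod>i\<in>{n+2..m}. TT t y i) / (TT t y 1 - TT t y k)) * Phi N a b rho (TT t y)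
     = complex_of_real (- D y) * Phi N a b rho y" for y
  proof -
    have P1: "(\<Prod>i\<in>{2..n+1}. (y (t i))\<^sup>2) = (y 1)\<^sup>2 * (\<Prod>i\<in>{2..n+1} - {k}. (y i)\<^sup>2)"
    proof -
      have "(\<Prod>i\<in>{2..n+1}. (y (t i))\<^sup>2) = (y (t k))\<^sup>2 * (\<Prod>i\<in>{2..n+1} - {k}. (y (t i))\<^sup>2)"
        by (rule prod.remove[OF _ kin]) simp
      also have "(\<Prod>i\<in>{2..n+1} - {k}. (y (t i))\<^sup>2) = (\<Prod>i\<in>{2..n+1} - {k}. (y i)\<^sup>2)"
        by (rule prod.cong) (use to in auto)
      finally show ?thesis by (simp add: tk)
    qed
    have P0: "(\<Prod>i\<in>{2..n+1}. (y i)\<^sup>2) = (y k)\<^sup>2 * (\<Prod>i\<in>{2..n+1} - {k}. (y i)\<^sup>2)"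
      by (rule prod.remove[OF _ kin]) simp
    have P2: "(\<Prod>i\<in>{n+2..m}. y (t i)) = (\<Prod>i\<in>{n+2..m}. y i)"
      by (rule prod.cong) (use kn to in auto)
    show ?thesis
    proof (cases "y 1 = y k")
      case True
      have "Phi N a b rho y = 0" by (rule Phi_zero[of 1 k]) (use True k2 kn nm mN in auto)
      then show ?thesis by (simp add: Phi_perm[OF tp])
    next
      case False
      have "y 1 * ((y k)\<^sup>2 * (\<Prod>i\<in>{2..n+1} - {k}. (y i)\<^sup>2)) * (\<Prod>i\<in>{n+2..m}. y i) / (y 1 - y k)
          + y k * ((y 1)\<^sup>2 * (\<Prod>i\<in>{2..n+1} - {k}. (y i)\<^sup>2)) * (\<Prod>i\<in>{n+2..m}. y i) / (y k - y 1) = - D y"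
        unfolding D_def by (rule alg1[OF False])
      then have "complex_of_real (y 1 * ((y k)\<^sup>2 * (\<Prod>i\<in>{2..n+1} - {k}. (y i)\<^sup>2)) * (\<Prod>i\<in>{n+2..m}. y i) / (y 1 - y k))
          + complex_of_real (y k * ((y 1)\<^sup>2 * (\<Prod>i\<in>{2..n+1} - {k}. (y i)\<^sup>2)) * (\<Prod>i\<in>{n+2..m}. y i) / (y k - y 1)) = complex_of_real (- D y)"
        by (metis of_real_add)
      then show ?thesis unfolding Phi_perm[OF tp] P0 P1 P2 t1 tk by (simp only: distrib_right[symmetric])
    qed
  qed
  have two: "(LINT y:Lam N|lebN N. complex_of_real (- D y) * Phi N a b rho y)
      = 2 * (LINT y:Lam N|lebN N. complex_of_real (y 1 * (\<Prod>i\<in>{2..n+1}. (y i)\<^sup>2) * (\<Prod>i\<in>{n+2..m}. y i) / (y 1 - y k)) * Phi N a b rho y)"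
    by (rule sym_two[OF tp int_lhs eqs])
  have neg: "(LINT y:Lam N|lebN N. complex_of_real (- D y) * Phi N a b rho y)
      = - (LINT y:Lam N|lebN N. complex_of_real (D y) * Phi N a b rho y)"
    by (simp only: of_real_minus mult_minus_left set_integral_neg)
  define sg where "sg i = (if 1 \<le> i \<and> i + 2 \<le> k then i + 1 else if k \<le> i + 1 \<and> i + 1 \<le> n then i + 2
      else if i = n then 1 else if i = n + 1 then k else i)" for i :: nat
  have n1: "1 \<le> n" using k2 kn by auto
  have sgin: "sg i \<in> {1..N}" if i: "i \<in> {1..N}" for i
    using i n1 nm mN k2 kn unfolding sg_def by auto
  have sginj: "inj_on sg {1..N}"
    using n1 k2 kn nm unfolding inj_on_def sg_def by (auto split: if_splits)
  have sgp: "sg permutes {1..N}"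
  proof (rule permI'[OF sgin sginj])
    show "\<And>i. i \<notin> {1..N} \<Longrightarrow> sg i = i" using n1 nm mN k2 kn by (auto simp: sg_def)
  qed
  have img: "sg ` {1..n-1} = {2..n+1} - {k}"
  proof
    show "sg ` {1..n-1} \<subseteq> {2..n+1} - {k}" using n1 k2 kn unfolding sg_def by auto
  next
    show "{2..n+1} - {k} \<subseteq> sg ` {1..n-1}"
    proof
      fix j assume j: "j \<in> {2..n+1} - {k}"
      show "j \<in> sg ` {1..n-1}"
      proof (cases "j < k")
        case True
        have "j = sg (j - 1)" using True j unfolding sg_def by auto
        moreover have "j - 1 \<in> {1..n-1}" using True j kn by auto
        ultimately show ?thesis by (rule image_eqI)
      next
        case False
        then have jk: "k < j" using j by auto
        have "j = sg (j - 2)" using jk j k2 unfolding sg_def by auto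
        moreover have "j - 2 \<in> {1..n-1}" using jk j k2 by auto
        ultimately show ?thesis by (rule image_eqI)
      qed
    qed
  qed
  have Dsg: "(\<Prod>i\<in>{1..n-1}. (y (sg i))\<^sup>2) * (\<Prod>i\<in>{n..m}. y (sg i)) = D y" for y
  proof -
    have inj1: "inj_on sg {1..n-1}" by (rule inj_on_subset[OF sginj]) (use nm mN in auto)
    have A: "(\<Prod>i\<in>{1..n-1}. (y (sg i))\<^sup>2) = (\<Prod>i\<in>{2..n+1} - {k}. (y i)\<^sup>2)"
      using prod.reindex[OF inj1, of "\<lambda>i. (y i)\<^sup>2"] unfolding img by (simp add: o_def)
    have B: "(\<Prod>i\<in>{n..m}. y (sg i)) = y (sg n) * (y (sg (Suc n)) * (\<Prod>i\<in>{Suc (Suc n)..m}. y (sg i)))"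
      using nm by (simp add: prod.atLeast_Suc_atMost)
    have sn: "sg n = 1" "sg (Suc n) = k" using n1 kn unfolding sg_def by auto
    have C: "(\<Prod>i\<in>{Suc (Suc n)..m}. y (sg i)) = (\<Prod>i\<in>{n+2..m}. y i)"
      by (rule prod.cong) (use kn in \<open>auto simp: sg_def\<close>)
    show ?thesis unfolding A B sn C D_def by (simp add: mult_ac)
  qed
  have "(LINT y:Lam N|lebN N. complex_of_real ((\<Prod>i\<in>{1..n-1}. (y i)\<^sup>2) * (\<Prod>i\<in>{n..m}. y i)) * Phi N a b rho y)
      = (LINT y:Lam N|lebN N. complex_of_real ((\<Prod>i\<in>{1..n-1}. (y (sg i))\<^sup>2) * (\<Prod>i\<in>{n..m}. y (sg i))) * Phi N a b rho (TT sg y))"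
    by (rule perm_set_integral[OF sgp])
  also have "\<dots> = (LINT y:Lam N|lebN N. complex_of_real (D y) * Phi N a b rho y)"
    unfolding Dsg Phi_perm[OF sgp] ..
  finally have eqQ: "(LINT y:Lam N|lebN N. complex_of_real ((\<Prod>i\<in>{1..n-1}. (y i)\<^sup>2) * (\<Prod>i\<in>{n..m}. y i)) * Phi N a b rho y)
      = (LINT y:Lam N|lebN N. complex_of_real (D y) * Phi N a b rho y)" .
  have gen: "\<And>(X::complex) Y. - Y = 2 * X \<Longrightarrow> X = - (1/2) * Y"
  proof -
    fix X Y :: complex assume "- Y = 2 * X"
    then have "Y = - (2 * X)" by (metis minus_minus)
    then show "X = - (1/2) * Y" by simp
  qed
  show ?thesis by (rule gen) (simp only: eqQ neg[symmetric] two)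
qed

theorem lemma3:
  fixes N m n k :: nat and a b rho :: complex
  assumes adm: "admissible N a b rho"
    and nm: "n < m" and mN: "m \<le> N" and k2: "2 \<le> k" and kN: "k \<le> N"
    and int_lhs: "set_integrable (lebN N) (Lam N)
       (\<lambda>y. complex_of_real (y 1 * (\<Prod>i\<in>{2..n+1}. (y i)\<^sup>2) * (\<Prod>i\<in>{n+2..m}. y i) / (y 1 - y k))
            * Phi N a b rho y)"
    and int_r1: "k \<le> n + 1 \<Longrightarrow> set_integrable (lebN N) (Lam N)
       (\<lambda>y. complex_of_real ((\<Prod>i\<in>{1..n-1}. (y i)\<^sup>2) * (\<Prod>i\<in>{n..m}. y i)) * Phi N a b rho y)"
    and int_r3: "m + 1 \<le> k \<Longrightarrow> set_integrable (lebN N) (Lam N)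
       (\<lambda>y. complex_of_real ((\<Prod>i\<in>{1..n}. (y i)\<^sup>2) * (\<Prod>i\<in>{n+1..m-1}. y i)) * Phi N a b rho y)"
  shows
   "(k \<le> n + 1 \<longrightarrow>
      (LINT y:Lam N|lebN N. complex_of_real (y 1 * (\<Prod>i\<in>{2..n+1}. (y i)\<^sup>2) * (\<Prod>i\<in>{n+2..m}. y i) / (y 1 - y k)) * Phi N a b rho y)
      = - (1/2) * (LINT y:Lam N|lebN N. complex_of_real ((\<Prod>i\<in>{1..n-1}. (y i)\<^sup>2) * (\<Prod>i\<in>{n..m}. y i)) * Phi N a b rho y))
  \<and> (n + 2 \<le> k \<and> k \<le> m \<longrightarrow>
      (LINT y:Lam N|lebN N. complex_of_real (y 1 * (\<Prod>i\<in>{2..n+1}. (y i)\<^sup>2) * (\<Prod>i\<in>{n+2..m}. y i) / (y 1 - y k)) * Phi N a b rho y)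
      = 0)
  \<and> (m + 1 \<le> k \<longrightarrow>
      (LINT y:Lam N|lebN N. complex_of_real (y 1 * (\<Prod>i\<in>{2..n+1}. (y i)\<^sup>2) * (\<Prod>i\<in>{n+2..m}. y i) / (y 1 - y k)) * Phi N a b rho y)
      = (1/2) * (LINT y:Lam N|lebN N. complex_of_real ((\<Prod>i\<in>{1..n}. (y i)\<^sup>2) * (\<Prod>i\<in>{n+1..m-1}. y i)) * Phi N a b rho y))"
proof (intro conjI impI)
  assume "k \<le> n + 1"
  then show "(LINT y:Lam N|lebN N. complex_of_real (y 1 * (\<Prod>i\<in>{2..n+1}. (y i)\<^sup>2) * (\<Prod>i\<in>{n+2..m}. y i) / (y 1 - y k)) * Phi N a b rho y)
      = - (1/2) * (LINT y:Lam N|lebN N. complex_of_real ((\<Prod>i\<in>{1..n-1}. (y i)\<^sup>2) * (\<Prod>i\<in>{n..m}. y i)) * Phi N a b rho y)"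
    by (rule case1[OF nm mN k2 _ int_lhs])
next
  assume "n + 2 \<le> k \<and> k \<le> m"
  then show "(LINT y:Lam N|lebN N. complex_of_real (y 1 * (\<Prod>i\<in>{2..n+1}. (y i)\<^sup>2) * (\<Prod>i\<in>{n+2..m}. y i) / (y 1 - y k)) * Phi N a b rho y) = 0"
    using case2[OF nm mN] by blast
next
  assume "m + 1 \<le> k"
  then show "(LINT y:Lam N|lebN N. complex_of_real (y 1 * (\<Prod>i\<in>{2..n+1}. (y i)\<^sup>2) * (\<Prod>i\<in>{n+2..m}. y i) / (y 1 - y k)) * Phi N a b rho y)
      = (1/2) * (LINT y:Lam N|lebN N. complex_of_real ((\<Prod>i\<in>{1..n}. (y i)\<^sup>2) * (\<Prod>i\<in>{n+1..m-1}. y i)) * Phi N a b rho y)"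
    by (rule case3[OF nm mN _ kN int_lhs])
qed

end
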